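(* Let $K\ge 2$, $T\ge 1$, $\delta\in(0,1/K]$, $c>0$, $\eta_0>0$, $c_\eta>0$. For $t=1,\dots,T$ let $\mathbf z_t\in\Delta^{K-1}$ and $\widetilde f_t\in\mathbb R$ with $|\widetilde f_t|\le c$, and set $\mathbf g_t:=-\widetilde f_t\mathbf z_t$ and $\ell_t(\mathbf w):=\mathbf g_t^\top\mathbf w=-\widetilde f_t\,\mathbf w^\top\mathbf z_t$. Let $\widehat{\mathbf w}_1=(1/K,\dots,1/K)$ and, for $t=1,\dots,T$, $$\widehat{\mathbf w}_{t+1}:=\arg\min_{\mathbf w\in\Delta^{K-1}}\Big\{\eta_t\,\mathbf g_t^\top\mathbf w+\mathrm{KL}(\mathbf w\,\|\,\widehat{\mathbf w}_t)\Big\},\qquad \eta_t:=\frac{\eta_0}{\sqrt{1+c_\eta t}}.$$ Let $\mathbf w_1,\dots,\mathbf w_T\in\Delta^{K-1}$ be a comparator sequence. Assume that all $\mathbf w_t$ ($t=1,\dots,T$) and all iterates $\widehat{\mathbf w}_t$ ($t=1,\dots,T+1$) lie in $\Delta^{K-1}_\delta$. Define $V_T:=\sum_{t=2}^T\|\mathbf w_t-\mathbf w_{t-1}\|_1$, $L_\delta:=1+\log(1/\delta)$ and the dynamic regret $R_T^{\mathrm{dyn}}:=\sum_{t=1}^T\ell_t(\widehat{\mathbf w}_t)-\sum_{t=1}^T\ell_t(\mathbf w_t)$. Then $$R_T^{\mathrm{dyn}}\le\sqrt{1+c_\eta T}\left(\frac{\log(1/\delta)+L_\delta V_T}{\eta_0}+\frac{c^2\eta_0}{c_\eta}\right).$$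 In particular, if $\eta_0=\sqrt{c_\eta(\log(1/\delta)+L_\delta V_T)}/c$, then $R_T^{\mathrm{dyn}}\le 2c\sqrt{\frac{\log(1/\delta)+L_\delta V_T}{c_\eta}}\sqrt{1+c_\eta T}$.
   Context: $\Delta^{K-1}:=\{\mathbf x\in\mathbb R^K_{\ge0}:\sum_k x_k=1\}$ is the probability simplex; $\Delta^{K-1}_\delta:=\{\mathbf w\in\Delta^{K-1}:w_k\ge\delta\ \forall k\}$ is the truncated simplex. $\mathrm{KL}(\mathbf u\|\mathbf w):=\sum_{k=1}^K u_k\log(u_k/w_k)$ (with $0\log 0=0$), which is the Bregman divergence of the negative entropy $d(\mathbf w)=\sum_k w_k\log w_k$. *)

theory Defs
  imports Complex_Main
begin

text \<open>Vectors in R^K are represented as functions nat => real, using only the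
coordinates 0..<K.\<close>

definition simplex :: "nat \<Rightarrow> (nat \<Rightarrow> real) set" where
  "simplex K = {x. (\<forall>k<K. x k \<ge> 0) \<and> (\<Sum>k<K. x k) = 1}"

definition trunc_simplex :: "nat \<Rightarrow> real \<Rightarrow> (nat \<Rightarrow> real) set" where
  "trunc_simplex K \<delta> = {w \<in> simplex K. \<forall>k<K. w k \<ge> \<delta>}"

definition KL :: "nat \<Rightarrow> (nat \<Rightarrow> real) \<Rightarrow> (nat \<Rightarrow> real) \<Rightarrow> real" where
  "KL K u w = (\<Sum>k<K. if u k = 0 then 0 else u k * ln (u k / w k))"

definition inner_K :: "nat \<Rightarrow> (nat \<Rightarrow> real) \<Rightarrow> (nat \<Rightarrow> real) \<Rightarrow> real" where
  "inner_K K x y = (\<Sum>k<K. x k * y k)"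

definition norm1_K :: "nat \<Rightarrow> (nat \<Rightarrow> real) \<Rightarrow> real" where
  "norm1_K K x = (\<Sum>k<K. \<bar>x k\<bar>)"

end

theory Submission
  imports Defs
begin


lemma wamgm:
  fixes A B s :: real
  assumes "A > 0" "B > 0" "0 \<le> s" "s \<le> 1"
  shows "(1 - s) * ln A + s * ln B \<le> ln ((1 - s) * A + s * B)"
proof -
  define M where "M = (1 - s) * A + s * B"
  have M: "M > 0" unfolding M_def using assms
    by (cases "s = 1") (auto intro: add_pos_nonneg add_nonneg_pos)
  have "ln (A / M) \<le> A / M - 1" using assms M by (intro ln_le_minus_one) simp
  moreover have "ln (B / M) \<le> B / M - 1" using assms M by (intro ln_le_minus_one) simp
  ultimately have "(1 - s) * ln (A / M) + s * ln (B / M) \<le> (1 - s) * (A / M - 1) + s * (B / M - 1)"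
    using assms by (intro add_mono mult_left_mono) auto
  also have "\<dots> = ((1 - s) * A + s * B) / M - 1" using M by (simp add: field_simps)
  also have "\<dots> = M / M - 1" by (simp add: M_def)
  also have "\<dots> = 0" using M by simp
  finally have "(1 - s) * ln (A / M) + s * ln (B / M) \<le> 0" .
  then show ?thesis unfolding M_def[symmetric] using assms M by (simp add: ln_div algebra_simps)
qed

lemma chord_exp:
  fixes x b :: real
  assumes "\<bar>x\<bar> \<le> b" "b > 0"
  shows "exp x \<le> ((b - x) * exp (-b) + (b + x) * exp b) / (2 * b)"
proof -
  define s where "s = (b + x) / (2*b)"
  have t0: "s \<ge> 0" "s \<le> 1" using assms by (auto simp: s_def field_simps)
  have "(1 - s) * ln (exp (-b)) + s * ln (exp b) \<le> ln ((1 - s) * exp (-b) + s * exp b)"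
    using wamgm[of "exp (-b)" "exp b" s] t0 by simp
  moreover have "(1 - s) * ln (exp (-b)) + s * ln (exp b) = x" using assms by (simp add: s_def field_simps)
  moreover have "(1 - s) * exp (-b) + s * exp b = ((b - x) * exp (-b) + (b + x) * exp b) / (2 * b)"
    using assms by (simp add: s_def field_simps)
  moreover have "(1 - s) * exp (-b) + s * exp b > 0" using t0
    by (cases "s = 1") (auto intro: add_pos_nonneg add_nonneg_pos)
  ultimately show ?thesis by (metis exp_le_cancel_iff exp_ln)
qed

lemma psi_nonneg:
  fixes b :: real assumes "b \<ge> 0" shows "sinh b \<le> b * cosh b"
proof -
  have "(\<lambda>y. y * cosh y - sinh y) 0 \<le> (\<lambda>y. y * cosh y - sinh y) b"
  proof (rule DERIV_nonneg_imp_nondecreasing[OF assms])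
    fix y :: real assume y: "0 \<le> y" "y \<le> b"
    have "((\<lambda>y. y * cosh y - sinh y) has_real_derivative (y * sinh y)) (at y)"
      by (auto intro!: derivative_eq_intros)
    then show "\<exists>d. ((\<lambda>y. y * cosh y - sinh y) has_real_derivative d) (at y) \<and> d \<ge> 0"
      using y by (intro exI[of _ "y * sinh y"]) auto
  qed
  then show ?thesis by simp
qed

lemma cosh_bound:
  fixes b :: real assumes "b \<ge> 0"
  shows "(exp (-b) + exp b) / 2 \<le> exp (b^2/2)"
proof -
  have "(\<lambda>y. y^2/2 - ln (cosh y)) 0 \<le> (\<lambda>y. y^2/2 - ln (cosh y)) b"
  proof (rule DERIV_nonneg_imp_nondecreasing[OF assms])
    fix y :: real assume y: "0 \<le> y" "y \<le> b"
    have "((\<lambda>y. y^2/2 - ln (cosh y)) has_real_derivative (y - sinh y / cosh y)) (at y)"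
      by (auto intro!: derivative_eq_intros simp: power2_eq_square)
    moreover have "sinh y / cosh y \<le> y" using psi_nonneg[OF y(1)] by (simp add: divide_le_eq)
    ultimately show "\<exists>d. ((\<lambda>y. y^2/2 - ln (cosh y)) has_real_derivative d) (at y) \<and> d \<ge> 0"
      by (intro exI[of _ "y - sinh y / cosh y"]) auto
  qed
  then have "ln (cosh b) \<le> b^2/2" by simp
  then have "cosh b \<le> exp (b^2/2)" by (metis cosh_real_pos exp_le_cancel_iff exp_ln)
  then show ?thesis by (simp add: cosh_field_def add.commute)
qed

lemma hoeffding_finite:
  fixes q Y :: "nat \<Rightarrow> real" and b :: real
  assumes q0: "\<forall>k<K. q k \<ge> 0" and q1: "(\<Sum>k<K. q k) = 1" and b: "b > 0"
    and Yb: "\<forall>k<K. \<forall>j<K. \<bar>Y k - Y j\<bar> \<le> b"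
  shows "ln (\<Sum>k<K. q k * exp (Y k)) \<le> (\<Sum>k<K. q k * Y k) + b^2/2"
proof -
  define m where "m = (\<Sum>k<K. q k * Y k)"
  have D: "\<bar>Y k - m\<bar> \<le> b" if k: "k < K" for k
  proof -
    have "Y k = (\<Sum>j<K. Y k * q j)" by (simp add: sum_distrib_left[symmetric] q1)
    then have "Y k - m = (\<Sum>j<K. q j * (Y k - Y j))"
      by (simp add: m_def right_diff_distrib sum_subtractf sum_distrib_right[symmetric] q1 mult.commute)
    also have "\<bar>\<dots>\<bar> \<le> (\<Sum>j<K. \<bar>q j * (Y k - Y j)\<bar>)" by (rule sum_abs)
    also have "\<dots> \<le> (\<Sum>j<K. q j * b)"
      apply (rule sum_mono) using q0 Yb k by (simp add: abs_mult mult_left_mono)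
    also have "\<dots> = b" by (simp add: sum_distrib_right[symmetric] q1)
    finally show ?thesis .
  qed
  have "(\<Sum>k<K. q k * exp (Y k)) = exp m * (\<Sum>k<K. q k * exp (Y k - m))"
    by (simp add: sum_distrib_left exp_diff field_simps)
  also have "(\<Sum>k<K. q k * exp (Y k - m)) \<le> (\<Sum>k<K. q k * (((b - (Y k - m)) * exp (-b) + (b + (Y k - m)) * exp b) / (2 * b)))"
    apply (rule sum_mono, rule mult_left_mono) using q0 chord_exp[OF D b] by auto
  also have "\<dots> = (\<Sum>k<K. q k * (b * exp (-b) + b * exp b) + (exp b - exp (-b)) * (q k * Y k - q k * m)) / (2*b)"
    by (simp add: sum_divide_distrib[symmetric] algebra_simps)
  also have "\<dots> = (b * exp (-b) + b * exp b) / (2*b)"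
    by (simp add: sum.distrib sum_distrib_right[symmetric] sum_distrib_left[symmetric] sum_subtractf q1 m_def)
  also have "\<dots> = (exp (-b) + exp b) / 2" using b by (simp add: field_simps)
  finally have "(\<Sum>k<K. q k * exp (Y k)) \<le> exp m * exp (b^2/2)"
    using cosh_bound[of b] b by (smt (verit) exp_gt_zero mult_left_mono)
  also have "\<dots> = exp (m + b^2/2)" by (simp add: exp_add)
  finally have le: "(\<Sum>k<K. q k * exp (Y k)) \<le> exp (m + b^2/2)" .
  have pos: "(\<Sum>k<K. q k * exp (Y k)) > 0"
  proof -
    have "(\<Sum>k<K. q k * exp (Y k)) \<ge> 0" using q0 by (intro sum_nonneg) auto
    moreover have "(\<Sum>k<K. q k * exp (Y k)) \<noteq> 0"
    proof
      assume "(\<Sum>k<K. q k * exp (Y k)) = 0"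
      then have "\<forall>k\<in>{..<K}. q k * exp (Y k) = 0" using q0 by (subst sum_nonneg_eq_0_iff[symmetric]) auto
      then have "\<forall>k<K. q k = 0" by simp
      then show False using q1 by simp
    qed
    ultimately show ?thesis by simp
  qed
  show ?thesis using le pos unfolding m_def by (metis ln_exp ln_le_cancel_iff exp_gt_zero)
qed



lemma ln_strict: fixes r :: real assumes "r > 0" "r \<noteq> 1" shows "ln r < r - 1"
proof -
  have s: "sqrt r > 0" using assms by simp
  have "ln r = 2 * ln (sqrt r)" using assms by (simp add: ln_sqrt)
  also have "\<dots> \<le> 2 * (sqrt r - 1)" using ln_le_minus_one[OF s] by simp
  also have "\<dots> < r - 1"
  proof -
    have "sqrt r \<noteq> 1" using assms by simp
    then have "(sqrt r - 1)^2 > 0" by simp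
    then show ?thesis using assms by (simp add: power2_eq_square algebra_simps)
  qed
  finally show ?thesis .
qed

lemma KL_pos: "(\<forall>k<K. u k > 0) \<Longrightarrow> KL K u w = (\<Sum>k<K. u k * ln (u k / w k))"
  unfolding KL_def by (intro sum.cong) auto

lemma KL_rewrite:
  assumes x: "\<forall>k<K. x k > 0" and y: "\<forall>k<K. y k > 0"
    and sx: "(\<Sum>k<K. x k) = 1" and sy: "(\<Sum>k<K. y k) = 1"
  shows "KL K x y = (\<Sum>k<K. x k * (y k / x k - 1 - ln (y k / x k)))"
proof -
  have "(\<Sum>k<K. x k * (y k / x k - 1 - ln (y k / x k))) = (\<Sum>k<K. (y k - x k) + x k * ln (x k / y k))"
  proof (rule sum.cong)
    fix k assume "k \<in> {..<K}"
    then have "x k > 0" "y k > 0" using x y by auto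
    then show "x k * (y k / x k - 1 - ln (y k / x k)) = (y k - x k) + x k * ln (x k / y k)"
      by (simp add: ln_div field_simps)
  qed simp
  also have "\<dots> = KL K x y" using sx sy x by (simp add: sum.distrib sum_subtractf KL_pos)
  finally show ?thesis by simp
qed

lemma gibbs:
  assumes x: "\<forall>k<K. x k > 0" and y: "\<forall>k<K. y k > 0"
    and sx: "(\<Sum>k<K. x k) = 1" and sy: "(\<Sum>k<K. y k) = 1"
  shows "KL K x y \<ge> 0" "KL K x y \<le> 0 \<Longrightarrow> \<forall>k<K. x k = y k"
proof -
  have nn: "\<forall>k\<in>{..<K}. x k * (y k / x k - 1 - ln (y k / x k)) \<ge> 0"
  proof
    fix k assume "k \<in> {..<K}"
    then have a: "x k > 0" "y k > 0" using x y by auto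
    then have "ln (y k / x k) \<le> y k / x k - 1" by (intro ln_le_minus_one) simp
    then show "x k * (y k / x k - 1 - ln (y k / x k)) \<ge> 0" using a by simp
  qed
  show "KL K x y \<ge> 0" unfolding KL_rewrite[OF assms] using nn by (intro sum_nonneg) auto
  assume "KL K x y \<le> 0"
  then have "(\<Sum>k<K. x k * (y k / x k - 1 - ln (y k / x k))) = 0"
    unfolding KL_rewrite[OF assms] using nn sum_nonneg[of "{..<K}"] by (smt (verit))
  then have z: "\<forall>k\<in>{..<K}. x k * (y k / x k - 1 - ln (y k / x k)) = 0"
    using nn by (subst sum_nonneg_eq_0_iff[symmetric]) auto
  show "\<forall>k<K. x k = y k"
  proof (intro allI impI)
    fix k assume k: "k < K"
    have "x k * (y k / x k - 1 - ln (y k / x k)) = 0" using z k by auto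
    moreover have "x k > 0" using x k by auto
    ultimately have "y k / x k - 1 - ln (y k / x k) = 0" by simp
    then have "y k / x k = 1" using ln_strict[of "y k / x k"] x y k by force
    then show "x k = y k" using x k by (simp add: field_simps)
  qed
qed

lemma KL_upper:
  assumes x: "\<forall>k<K. x k > 0" and sx: "(\<Sum>k<K. x k) = 1" and y: "\<forall>k<K. y k \<ge> \<delta>" and d: "\<delta> > 0"
  shows "KL K x y \<le> ln (1/\<delta>)"
proof -
  have "KL K x y = (\<Sum>k<K. x k * (ln (x k) - ln (y k)))"
    unfolding KL_pos[OF x] using x y d by (intro sum.cong) (auto simp: ln_div)
  also have "\<dots> \<le> (\<Sum>k<K. x k * ln (1/\<delta>))"
  proof (rule sum_mono)
    fix k assume "k \<in> {..<K}"
    then have k: "k < K" by simp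
    have "x k \<le> 1" using sx x k member_le_sum[of k "{..<K}" x] by (simp add: less_imp_le)
    then have l0: "ln (x k) \<le> 0" using x k by simp
    have "- ln (y k) \<le> ln (1/\<delta>)"
    proof -
      have "y k \<ge> \<delta>" using y k by auto
      then show ?thesis using d by (simp add: ln_div)
    qed
    then have "ln (x k) - ln (y k) \<le> ln (1/\<delta>)" using l0 by linarith
    then show "x k * (ln (x k) - ln (y k)) \<le> x k * ln (1/\<delta>)"
      using x k by (intro mult_left_mono) auto
  qed
  also have "\<dots> = ln (1/\<delta>)" using sx by (simp add: sum_distrib_right[symmetric])
  finally show ?thesis .
qed

lemma KL_diff:
  assumes x: "\<forall>k<K. x k \<ge> \<delta> \<and> x k \<le> 1" and y: "\<forall>k<K. y k \<ge> \<delta> \<and> y k \<le> 1"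
    and w: "\<forall>k<K. w k \<ge> \<delta> \<and> w k \<le> 1" and d: "\<delta> > 0"
  shows "KL K x w - KL K y w \<le> (1 + ln (1/\<delta>)) * (\<Sum>k<K. \<bar>x k - y k\<bar>)"
proof -
  have xp: "\<forall>k<K. x k > 0" and yp: "\<forall>k<K. y k > 0" using x y d by force+
  have "KL K x w - KL K y w = (\<Sum>k<K. x k * ln (x k / w k) - y k * ln (y k / w k))"
    unfolding KL_pos[OF xp] KL_pos[OF yp] by (simp add: sum_subtractf)
  also have "\<dots> \<le> (\<Sum>k<K. (1 + ln (1/\<delta>)) * \<bar>x k - y k\<bar>)"
  proof (rule sum_mono)
    fix k assume "k \<in> {..<K}"
    then have k: "k < K" by simp
    have xk: "x k > 0" "y k > 0" "w k > 0" using x y w d k by force+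
    have "x k * ln (x k / w k) - y k * ln (y k / w k) - (1 + ln (x k / w k)) * (x k - y k)
          = y k * (ln (x k / y k) - (x k / y k - 1))"
      using xk by (simp add: ln_div algebra_simps diff_divide_distrib)
    also have "\<dots> \<le> 0" using ln_le_minus_one[of "x k / y k"] xk by (simp add: mult_nonneg_nonpos)
    finally have A: "x k * ln (x k / w k) - y k * ln (y k / w k) \<le> (1 + ln (x k / w k)) * (x k - y k)" by simp
    have u: "ln (x k / w k) \<le> ln (1/\<delta>)"
    proof -
      have "\<delta> * x k \<le> \<delta>" using x k d by (simp add: mult_left_le)
      also have "\<delta> \<le> w k" using w k by auto
      finally have "x k / w k \<le> 1 / \<delta>" using xk d by (simp add: field_simps)
      then show ?thesis using xk d by simp
    qed
    have l: "ln (x k / w k) \<ge> - ln (1/\<delta>)"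
    proof -
      have "\<delta> * w k \<le> \<delta>" using w k d by (simp add: mult_left_le)
      also have "\<delta> \<le> x k" using x k by auto
      finally have "x k / w k \<ge> \<delta>" using xk by (simp add: field_simps)
      then have "ln (x k / w k) \<ge> ln \<delta>" using xk d by simp
      then show ?thesis using d by (simp add: ln_div)
    qed
    have B: "\<bar>1 + ln (x k / w k)\<bar> \<le> 1 + ln (1/\<delta>)" using u l by linarith
    have "(1 + ln (x k / w k)) * (x k - y k) \<le> \<bar>1 + ln (x k / w k)\<bar> * \<bar>x k - y k\<bar>"
      by (metis abs_ge_self abs_mult)
    also have "\<dots> \<le> (1 + ln (1/\<delta>)) * \<bar>x k - y k\<bar>" using B by (rule mult_right_mono) simp
    finally have "(1 + ln (x k / w k)) * (x k - y k) \<le> (1 + ln (1/\<delta>)) * \<bar>x k - y k\<bar>" .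
    with A show "x k * ln (x k / w k) - y k * ln (y k / w k) \<le> (1 + ln (1/\<delta>)) * \<bar>x k - y k\<bar>" by simp
  qed
  also have "\<dots> = (1 + ln (1/\<delta>)) * (\<Sum>k<K. \<bar>x k - y k\<bar>)" by (simp add: sum_distrib_left)
  finally show ?thesis .
qed



lemma omd_step:
  fixes q q' u gv :: "nat \<Rightarrow> real" and \<eta> b :: real
  assumes q: "\<forall>k<K. q k > 0" and sq: "(\<Sum>k<K. q k) = 1"
    and q': "\<forall>k<K. q' k > 0" and sq': "(\<Sum>k<K. q' k) = 1"
    and u: "\<forall>k<K. u k > 0" and su: "(\<Sum>k<K. u k) = 1"
    and eta: "\<eta> > 0" and b: "b > 0"
    and Yb: "\<forall>k<K. \<forall>j<K. \<bar>\<eta> * gv j - \<eta> * gv k\<bar> \<le> b"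
    and minp: "\<forall>v\<in>simplex K. \<eta> * inner_K K gv q' + KL K q' q \<le> \<eta> * inner_K K gv v + KL K v q"
  shows "\<eta> * (inner_K K gv q - inner_K K gv u) \<le> KL K u q - KL K u q' + b^2/2"
proof -
  define Z where "Z = (\<Sum>k<K. q k * exp (-\<eta> * gv k))"
  have K0: "{..<K} \<noteq> {}" using sq by auto
  have Zpos: "Z > 0" unfolding Z_def using q K0 by (intro sum_pos) auto
  define p where "p = (\<lambda>k. q k * exp (-\<eta> * gv k) / Z)"
  have pp: "\<forall>k<K. p k > 0" using q Zpos by (auto simp: p_def)
  have sp: "(\<Sum>k<K. p k) = 1" unfolding p_def sum_divide_distrib[symmetric] Z_def[symmetric] using Zpos by simp
  have ident: "KL K v p = KL K v q + \<eta> * inner_K K gv v + ln Z"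
    if v: "\<forall>k<K. v k > 0" and sv: "(\<Sum>k<K. v k) = 1" for v
  proof -
    have "KL K v p = (\<Sum>k<K. v k * ln (v k / q k) + \<eta> * (gv k * v k) + ln Z * v k)"
      unfolding KL_pos[OF v]
    proof (rule sum.cong)
      fix k assume "k \<in> {..<K}"
      then have a: "v k > 0" "q k > 0" using v q by auto
      have "ln (p k) = ln (q k) - \<eta> * gv k - ln Z"
        using a Zpos by (simp add: p_def ln_div ln_mult)
      moreover have "p k > 0" using pp \<open>k \<in> {..<K}\<close> by auto
      ultimately have "ln (v k / p k) = ln (v k / q k) + \<eta> * gv k + ln Z"
        using a by (simp add: ln_div)
      then show "v k * ln (v k / p k) = v k * ln (v k / q k) + \<eta> * (gv k * v k) + ln Z * v k"
        by (simp add: algebra_simps)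
    qed simp
    also have "\<dots> = KL K v q + \<eta> * inner_K K gv v + ln Z"
      using sv by (simp add: sum.distrib KL_pos[OF v] inner_K_def sum_distrib_left[symmetric]
          sum_distrib_left[of "ln Z", symmetric])
    finally show ?thesis .
  qed
  have psimp: "p \<in> simplex K" using pp sp by (auto simp: simplex_def less_imp_le)
  have "KL K p p = 0" unfolding KL_pos[OF pp] using pp by (intro sum.neutral) auto
  then have Fp: "\<eta> * inner_K K gv p + KL K p q = - ln Z" using ident[OF pp sp] by simp
  have "KL K q' p \<le> 0" using minp psimp Fp ident[OF q' sq'] by force
  then have eq: "\<forall>k<K. q' k = p k" using gibbs(2)[OF q' pp sq' sp] by simp
  have "KL K u q' = KL K u p" unfolding KL_def using eq by (intro sum.cong) auto
  then have U: "KL K u q' = KL K u q + \<eta> * inner_K K gv u + ln Z" using ident[OF u su] by simp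
  have "ln Z \<le> (\<Sum>k<K. q k * (-\<eta> * gv k)) + b^2/2"
    unfolding Z_def
  proof (rule hoeffding_finite)
    show "\<forall>k<K. 0 \<le> q k" using q by (simp add: less_imp_le)
    show "\<forall>k<K. \<forall>j<K. \<bar>- \<eta> * gv k - - \<eta> * gv j\<bar> \<le> b" using Yb by simp
  qed (use sq b in auto)
  also have "(\<Sum>k<K. q k * (-\<eta> * gv k)) = - \<eta> * inner_K K gv q"
    by (simp add: inner_K_def sum_distrib_left sum_negf algebra_simps)
  finally have H: "ln Z \<le> - \<eta> * inner_K K gv q + b^2/2" .
  show ?thesis using U H by (simp add: algebra_simps)
qed

lemma telescope:
  fixes a bb e d :: "nat \<Rightarrow> real" and l L :: real
  assumes "\<And>t. 1 \<le> t \<Longrightarrow> t \<le> N \<Longrightarrow> a t \<le> l"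
    and "\<And>t. 1 \<le> t \<Longrightarrow> t \<le> N \<Longrightarrow> bb t \<le> l"
    and "\<And>t. 2 \<le> t \<Longrightarrow> t \<le> N \<Longrightarrow> a t - bb (t - 1) \<le> L * d t"
    and "\<And>t. 2 \<le> t \<Longrightarrow> t \<le> N \<Longrightarrow> e (t - 1) \<le> e t"
    and "\<And>t. 1 \<le> t \<Longrightarrow> t \<le> N \<Longrightarrow> e t > 0"
  shows "1 \<le> T \<Longrightarrow> T \<le> N \<Longrightarrow>
    (\<Sum>t\<in>{1..T}. (a t - bb t) * e t) + bb T * e T \<le> l * e T + (\<Sum>t\<in>{2..T}. L * d t * e t)"
proof (induction T)
  case 0 then show ?case by simp
next
  case (Suc T)
  show ?case
  proof (cases "T = 0")
    case True
    have "(a 1 - bb 1) * e 1 + bb 1 * e 1 = a 1 * e 1" by (simp add: algebra_simps)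
    moreover have "a 1 * e 1 \<le> l * e 1" using assms(1)[of 1] assms(5)[of 1] Suc True by (intro mult_right_mono) auto
    ultimately show ?thesis using True by simp
  next
    case False
    then have IH: "(\<Sum>t\<in>{1..T}. (a t - bb t) * e t) + bb T * e T \<le> l * e T + (\<Sum>t\<in>{2..T}. L * d t * e t)"
      using Suc by simp
    have s1: "(\<Sum>t\<in>{1..Suc T}. (a t - bb t) * e t) = (\<Sum>t\<in>{1..T}. (a t - bb t) * e t) + (a (Suc T) - bb (Suc T)) * e (Suc T)"
      by simp
    have s2: "(\<Sum>t\<in>{2..Suc T}. L * d t * e t) = (\<Sum>t\<in>{2..T}. L * d t * e t) + L * d (Suc T) * e (Suc T)"
      using False by simp
    have A: "a (Suc T) - bb T \<le> L * d (Suc T)" using assms(3)[of "Suc T"] Suc False by simp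
    have B: "bb T \<le> l" using assms(2)[of T] Suc False by simp
    have E: "e T \<le> e (Suc T)" using assms(4)[of "Suc T"] Suc False by simp
    have E1: "e (Suc T) > 0" using assms(5)[of "Suc T"] Suc by simp
    have "a (Suc T) * e (Suc T) - bb T * e T = (a (Suc T) - bb T) * e (Suc T) + bb T * (e (Suc T) - e T)"
      by (simp add: algebra_simps)
    also have "\<dots> \<le> L * d (Suc T) * e (Suc T) + l * (e (Suc T) - e T)"
      using A B E E1 by (intro add_mono mult_right_mono) auto
    finally show ?thesis using IH s1 s2 by (simp add: algebra_simps)
  qed
qed

lemma sqrt_sum:
  fixes a :: real assumes a: "a > 0"
  shows "(\<Sum>t\<in>{1..T}. 1 / sqrt (1 + a * real t)) \<le> (2 / a) * sqrt (1 + a * real T) - 2 / a"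
proof (induction T)
  case 0 then show ?case by simp
next
  case (Suc T)
  define x where "x = sqrt (1 + a * real T)"
  define y where "y = sqrt (1 + a * real (Suc T))"
  have x1: "x \<ge> 1" using a by (simp add: x_def)
  have xy: "x \<le> y" using a by (simp add: x_def y_def)
  have yy: "y^2 = x^2 + a" using a by (simp add: x_def y_def algebra_simps)
  have "1 / y \<le> (2 / a) * (y - x)"
  proof -
    have "a = (y - x) * (y + x)" using yy by (simp add: power2_eq_square algebra_simps)
    also have "\<dots> \<le> (y - x) * (2 * y)" using xy by (intro mult_left_mono) auto
    finally have "a \<le> 2 * y * (y - x)" by (simp add: algebra_simps)
    then show ?thesis using a x1 xy by (simp add: field_simps)
  qed
  then show ?case using Suc by (simp add: x_def y_def algebra_simps)
qed


theorem theorem1: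
  fixes K T :: nat
    and \<delta> c \<eta>0 c\<eta> :: real
    and z :: "nat \<Rightarrow> nat \<Rightarrow> real"
    and ft :: "nat \<Rightarrow> real"
    and what w :: "nat \<Rightarrow> nat \<Rightarrow> real"
  defines "g \<equiv> (\<lambda>t k. - ft t * z t k)"
    and "\<eta> \<equiv> (\<lambda>t. \<eta>0 / sqrt (1 + c\<eta> * real t))"
    and "V \<equiv> (\<Sum>t\<in>{2..T}. norm1_K K (\<lambda>k. w t k - w (t - 1) k))"
    and "L\<delta> \<equiv> 1 + ln (1 / \<delta>)"
    and "R \<equiv> (\<Sum>t\<in>{1..T}. inner_K K (\<lambda>k. - ft t * z t k) (what t))
             - (\<Sum>t\<in>{1..T}. inner_K K (\<lambda>k. - ft t * z t k) (w t))"
  assumes K2: "K \<ge> 2" and T1: "T \<ge> 1"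
    and \<delta>pos: "0 < \<delta>" and \<delta>le: "\<delta> \<le> 1 / real K"
    and cpos: "c > 0" and \<eta>0pos: "\<eta>0 > 0" and c\<eta>pos: "c\<eta> > 0"
    and z_simp: "\<And>t. t \<in> {1..T} \<Longrightarrow> z t \<in> simplex K"
    and f_bd: "\<And>t. t \<in> {1..T} \<Longrightarrow> \<bar>ft t\<bar> \<le> c"
    and what1: "what 1 = (\<lambda>k. 1 / real K)"
    and what_step: "\<And>t. t \<in> {1..T} \<Longrightarrow> what (Suc t) \<in> simplex K \<and>
         (\<forall>v \<in> simplex K. \<eta> t * inner_K K (g t) (what (Suc t)) + KL K (what (Suc t)) (what t)
                            \<le> \<eta> t * inner_K K (g t) v + KL K v (what t))"
    and w_simp: "\<And>t. t \<in> {1..T} \<Longrightarrow> w t \<in> simplex K"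
    and w_trunc: "\<And>t. t \<in> {1..T} \<Longrightarrow> w t \<in> trunc_simplex K \<delta>"
    and what_trunc: "\<And>t. t \<in> {1..Suc T} \<Longrightarrow> what t \<in> trunc_simplex K \<delta>"
  shows "R \<le> sqrt (1 + c\<eta> * real T) * ((ln (1 / \<delta>) + L\<delta> * V) / \<eta>0 + c\<^sup>2 * \<eta>0 / c\<eta>)
       \<and> (\<eta>0 = sqrt (c\<eta> * (ln (1 / \<delta>) + L\<delta> * V)) / c \<longrightarrow>
            R \<le> 2 * c * sqrt ((ln (1 / \<delta>) + L\<delta> * V) / c\<eta>) * sqrt (1 + c\<eta> * real T))"
proof -
  define e where "e = (\<lambda>t::nat. 1 / \<eta> t)"
  have sq1: "\<And>t::nat. sqrt (1 + c\<eta> * real t) \<ge> 1" using c\<eta>pos by simp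
  have etapos: "\<And>t. \<eta> t > 0" unfolding \<eta>_def using \<eta>0pos sq1
    by (metis divide_pos_pos less_le_trans zero_less_one)
  have e_eq: "\<And>t. e t = sqrt (1 + c\<eta> * real t) / \<eta>0" unfolding e_def \<eta>_def by simp
  have epos: "\<And>t. e t > 0" using etapos by (simp add: e_def)
  have emono: "\<And>s t. s \<le> t \<Longrightarrow> e s \<le> e t" unfolding e_eq using c\<eta>pos \<eta>0pos
    by (intro divide_right_mono) (auto intro: mult_left_mono)
  have \<delta>1: "\<delta> < 1" using \<delta>le K2
  proof -
    have "real K \<ge> 2" using K2 by simp
    then have "1 / real K \<le> 1 / 2" by (intro divide_left_mono) auto
    then show ?thesis using \<delta>le by linarith
  qed
  have l0: "ln (1/\<delta>) \<ge> 0" using \<delta>pos \<delta>1 by simp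
  have L0: "L\<delta> \<ge> 0" unfolding L\<delta>_def using l0 by simp
  have tr: "\<forall>k<K. x k > 0" "(\<Sum>k<K. x k) = 1" "\<forall>k<K. x k \<ge> \<delta> \<and> x k \<le> 1" "\<forall>k<K. x k \<ge> \<delta>"
    if "x \<in> trunc_simplex K \<delta>" for x
  proof -
    show "\<forall>k<K. x k \<ge> \<delta>" using that by (simp add: trunc_simplex_def)
    then show "\<forall>k<K. x k > 0" using \<delta>pos by force
    show s: "(\<Sum>k<K. x k) = 1" using that by (simp add: trunc_simplex_def simplex_def)
    show "\<forall>k<K. x k \<ge> \<delta> \<and> x k \<le> 1"
    proof (intro allI impI conjI)
      fix k assume k: "k < K"
      show "x k \<ge> \<delta>" using that k by (simp add: trunc_simplex_def)
      show "x k \<le> 1" using s that k member_le_sum[of k "{..<K}" x]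
        by (simp add: trunc_simplex_def simplex_def)
    qed
  qed
  define a where "a = (\<lambda>t. KL K (w t) (what t))"
  define bb where "bb = (\<lambda>t. KL K (w t) (what (Suc t)))"
  define d where "d = (\<lambda>t. norm1_K K (\<lambda>k. w t k - w (t - 1) k))"
  have step: "inner_K K (g t) (what t) - inner_K K (g t) (w t) \<le> (a t - bb t) * e t + \<eta> t * c^2 / 2"
    if t: "t \<in> {1..T}" for t
  proof -
    have W1: "what t \<in> trunc_simplex K \<delta>" using what_trunc t by auto
    have W2: "what (Suc t) \<in> trunc_simplex K \<delta>" using what_trunc t by auto
    have W3: "w t \<in> trunc_simplex K \<delta>" using w_trunc t by auto
    have zb: "\<forall>k<K. z t k \<ge> 0 \<and> z t k \<le> 1"
    proof (intro allI impI conjI)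
      fix k assume k: "k < K"
      have zs: "z t \<in> simplex K" using z_simp t by auto
      then show "z t k \<ge> 0" using k by (simp add: simplex_def)
      show "z t k \<le> 1" using zs k member_le_sum[of k "{..<K}" "z t"] by (simp add: simplex_def)
    qed
    have Yb: "\<forall>k<K. \<forall>j<K. \<bar>\<eta> t * g t j - \<eta> t * g t k\<bar> \<le> \<eta> t * c"
    proof (intro allI impI)
      fix k j assume k: "k < K" and j: "j < K"
      have "\<eta> t * g t j - \<eta> t * g t k = \<eta> t * (ft t * (z t k - z t j))"
        by (simp add: g_def algebra_simps)
      then have "\<bar>\<eta> t * g t j - \<eta> t * g t k\<bar> = \<eta> t * (\<bar>ft t\<bar> * \<bar>z t k - z t j\<bar>)"
        using etapos[of t] by (simp add: abs_mult)
      also have "\<dots> \<le> \<eta> t * (c * 1)"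
      proof -
        have "\<bar>z t k - z t j\<bar> \<le> 1" using zb[rule_format, OF k] zb[rule_format, OF j] by linarith
        then have "\<bar>ft t\<bar> * \<bar>z t k - z t j\<bar> \<le> c * 1" using f_bd[OF t]
          by (intro mult_mono) auto
        then show ?thesis using etapos[of t] by (intro mult_left_mono) auto
      qed
      finally show "\<bar>\<eta> t * g t j - \<eta> t * g t k\<bar> \<le> \<eta> t * c" by simp
    qed
    have bpos: "\<eta> t * c > 0" using etapos cpos by simp
    have "\<eta> t * (inner_K K (g t) (what t) - inner_K K (g t) (w t)) \<le> a t - bb t + (\<eta> t * c)^2/2"
      unfolding a_def bb_def
      by (rule omd_step[OF tr(1,2)[OF W1] tr(1,2)[OF W2] tr(1,2)[OF W3] etapos bpos Yb])
        (use what_step[OF t] in auto)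
    then have "inner_K K (g t) (what t) - inner_K K (g t) (w t) \<le> (a t - bb t + (\<eta> t * c)^2/2) / \<eta> t"
      using etapos[of t] by (simp add: field_simps)
    also have "\<dots> = (a t - bb t) * e t + \<eta> t * c^2 / 2"
      using etapos[of t] by (simp add: e_def field_simps power2_eq_square)
    finally show ?thesis .
  qed
  have R_eq: "R = (\<Sum>t\<in>{1..T}. inner_K K (g t) (what t) - inner_K K (g t) (w t))"
    unfolding R_def g_def by (simp add: sum_subtractf)
  have R1: "R \<le> (\<Sum>t\<in>{1..T}. (a t - bb t) * e t) + (c^2/2) * (\<Sum>t\<in>{1..T}. \<eta> t)"
  proof -
    have "R \<le> (\<Sum>t\<in>{1..T}. (a t - bb t) * e t + \<eta> t * c^2 / 2)"
      unfolding R_eq by (rule sum_mono) (use step in auto)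
    also have "\<dots> = (\<Sum>t\<in>{1..T}. (a t - bb t) * e t) + (\<Sum>t\<in>{1..T}. \<eta> t * c^2 / 2)"
      by (rule sum.distrib)
    also have "(\<Sum>t\<in>{1..T}. \<eta> t * c^2 / 2) = (c^2/2) * (\<Sum>t\<in>{1..T}. \<eta> t)"
      by (subst sum_distrib_left) (simp add: mult_ac)
    finally show ?thesis .
  qed
  have tel: "(\<Sum>t\<in>{1..T}. (a t - bb t) * e t) + bb T * e T \<le> ln (1/\<delta>) * e T + (\<Sum>t\<in>{2..T}. L\<delta> * d t * e t)"
  proof (rule telescope[where N = T])
    fix t assume t: "1 \<le> t" "t \<le> T"
    show "a t \<le> ln (1/\<delta>)" unfolding a_def
      using KL_upper[OF tr(1,2)[OF w_trunc] tr(4)[OF what_trunc] \<delta>pos] t by auto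
    show "bb t \<le> ln (1/\<delta>)" unfolding bb_def
      using KL_upper[OF tr(1,2)[OF w_trunc] tr(4)[OF what_trunc] \<delta>pos] t by auto
    show "e t > 0" by (rule epos)
  next
    fix t assume t: "2 \<le> t" "t \<le> T"
    show "e (t - 1) \<le> e t" by (rule emono) simp
    have st: "Suc (t - 1) = t" using t by simp
    have "KL K (w t) (what t) - KL K (w (t-1)) (what t) \<le> L\<delta> * (\<Sum>k<K. \<bar>w t k - w (t-1) k\<bar>)"
      unfolding L\<delta>_def
      by (rule KL_diff[OF tr(3)[OF w_trunc] tr(3)[OF w_trunc] tr(3)[OF what_trunc] \<delta>pos]) (use t in auto)
    then show "a t - bb (t - 1) \<le> L\<delta> * d t" unfolding a_def bb_def d_def norm1_K_def st .
  qed (use T1 in auto)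
  have bbT: "bb T \<ge> 0" unfolding bb_def
    using gibbs(1)[OF tr(1)[OF w_trunc] tr(1)[OF what_trunc] tr(2)[OF w_trunc] tr(2)[OF what_trunc]] T1 by auto
  have dsum: "(\<Sum>t\<in>{2..T}. L\<delta> * d t * e t) \<le> L\<delta> * V * e T"
  proof -
    have "(\<Sum>t\<in>{2..T}. L\<delta> * d t * e t) \<le> (\<Sum>t\<in>{2..T}. L\<delta> * d t * e T)"
    proof (rule sum_mono)
      fix t assume "t \<in> {2..T}"
      then have "e t \<le> e T" by (intro emono) auto
      moreover have "d t \<ge> 0" unfolding d_def norm1_K_def by (intro sum_nonneg) auto
      ultimately show "L\<delta> * d t * e t \<le> L\<delta> * d t * e T" using L0 by (intro mult_left_mono) auto
    qed
    also have "\<dots> = L\<delta> * V * e T" unfolding V_def d_def by (simp add: sum_distrib_left sum_distrib_right)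
    finally show ?thesis .
  qed
  have etasum: "(\<Sum>t\<in>{1..T}. \<eta> t) \<le> \<eta>0 * (2 / c\<eta>) * sqrt (1 + c\<eta> * real T)"
  proof -
    have "(\<Sum>t\<in>{1..T}. \<eta> t) = \<eta>0 * (\<Sum>t\<in>{1..T}. 1 / sqrt (1 + c\<eta> * real t))"
      unfolding \<eta>_def by (simp add: sum_distrib_left)
    also have "\<dots> \<le> \<eta>0 * ((2 / c\<eta>) * sqrt (1 + c\<eta> * real T) - 2 / c\<eta>)"
      using sqrt_sum[OF c\<eta>pos, of T] \<eta>0pos by (intro mult_left_mono) auto
    also have "\<dots> \<le> \<eta>0 * (2 / c\<eta>) * sqrt (1 + c\<eta> * real T)"
      using \<eta>0pos c\<eta>pos by (simp add: algebra_simps)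
    finally show ?thesis .
  qed
  have main: "R \<le> sqrt (1 + c\<eta> * real T) * ((ln (1 / \<delta>) + L\<delta> * V) / \<eta>0 + c\<^sup>2 * \<eta>0 / c\<eta>)"
  proof -
    have "(\<Sum>t\<in>{1..T}. (a t - bb t) * e t) \<le> ln (1/\<delta>) * e T + L\<delta> * V * e T"
    proof -
      have "bb T * e T \<ge> 0" using bbT epos[of T] by simp
      then show ?thesis using tel dsum by linarith
    qed
    moreover have "(c^2/2) * (\<Sum>t\<in>{1..T}. \<eta> t) \<le> (c^2/2) * (\<eta>0 * (2 / c\<eta>) * sqrt (1 + c\<eta> * real T))"
      using etasum by (intro mult_left_mono) auto
    ultimately have "R \<le> ln (1/\<delta>) * e T + L\<delta> * V * e T + (c^2/2) * (\<eta>0 * (2 / c\<eta>) * sqrt (1 + c\<eta> * real T))"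
      using R1 by linarith
    also have "\<dots> = sqrt (1 + c\<eta> * real T) * ((ln (1 / \<delta>) + L\<delta> * V) / \<eta>0 + c\<^sup>2 * \<eta>0 / c\<eta>)"
      unfolding e_eq using \<eta>0pos c\<eta>pos by (simp add: field_simps)
    finally show ?thesis .
  qed
  show ?thesis
  proof (intro conjI impI main)
    assume h: "\<eta>0 = sqrt (c\<eta> * (ln (1 / \<delta>) + L\<delta> * V)) / c"
    define A where "A = ln (1 / \<delta>) + L\<delta> * V"
    have "sqrt (c\<eta> * A) > 0" using h \<eta>0pos cpos unfolding A_def by (simp add: zero_less_divide_iff)
    then have Apos: "A > 0" using c\<eta>pos by (simp add: zero_less_mult_iff)
    have sA: "sqrt A * sqrt A = A" using Apos by simp
    have sc: "sqrt c\<eta> * sqrt c\<eta> = c\<eta>" using c\<eta>pos by simp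
    have h': "\<eta>0 = sqrt c\<eta> * sqrt A / c" using h unfolding A_def by (simp add: real_sqrt_mult)
    have "A / \<eta>0 + c\<^sup>2 * \<eta>0 / c\<eta> = 2 * c * (sqrt A / sqrt c\<eta>)"
    proof -
      have p1: "sqrt A > 0" "sqrt c\<eta> > 0" using Apos c\<eta>pos by auto
      have "A / \<eta>0 = (sqrt A * sqrt A) / (sqrt c\<eta> * sqrt A / c)" unfolding h' sA ..
      also have "\<dots> = c * (sqrt A / sqrt c\<eta>)" using p1 cpos by (simp add: field_simps)
      finally have e1: "A / \<eta>0 = c * (sqrt A / sqrt c\<eta>)" .
      have "c\<^sup>2 * \<eta>0 / c\<eta> = c\<^sup>2 * (sqrt c\<eta> * sqrt A / c) / (sqrt c\<eta> * sqrt c\<eta>)" unfolding h' sc ..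
      also have "\<dots> = c * (sqrt A / sqrt c\<eta>)" using p1 cpos by (simp add: field_simps power2_eq_square)
      finally have e2: "c\<^sup>2 * \<eta>0 / c\<eta> = c * (sqrt A / sqrt c\<eta>)" .
      show ?thesis using e1 e2 by simp
    qed
    then show "R \<le> 2 * c * sqrt ((ln (1 / \<delta>) + L\<delta> * V) / c\<eta>) * sqrt (1 + c\<eta> * real T)"
      using main unfolding A_def[symmetric] by (simp add: real_sqrt_divide mult_ac)
  qed
qed

end
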